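(* Let $k$ be a field, $V$ a $k$-vector space, $N\geq 2$, $R\subseteq V^{\otimes N}$ a subspace, $A=T(V)/(R)$, and $M$ an $A$-bimodule; let $M^\ast$ and $\eta_p:\mathrm{Hom}_k(M\otimes W_{\nu(p)},k)\to\mathrm{Hom}_k(W_{\nu(p)},M^\ast)$, $\eta_p(\varphi)(x_1\dots x_{\nu(p)})(m)=\varphi(m\otimes x_1\dots x_{\nu(p)})$, be as in the context. Then $\eta$ is compatible with the actions of Koszul cochains with coefficients in $A$: for all $q\ge p\ge 0$, every Koszul $p$-cochain $f:W_{\nu(p)}\to A$ and every $\varphi\in\mathrm{Hom}_k(M\otimes W_{\nu(q-p)},k)$, $$\eta_q\big(\varphi\circ(f\underset{K}{\frown}-)\big)=\eta_{q-p}(\varphi)\underset{K}{\smile}f,\qquad \eta_q\big(\varphi\circ(-\underset{K}{\frown}f)\big)=(-1)^p\,f\underset{K}{\smile}\eta_{q-p}(\varphi),$$ (here $f\underset{K}{\frown}-$ and $-\underset{K}{\frown}f$ are regarded as maps $M\otimes W_{\nu(q)}\to M\otimes W_{\nu(q-p)}$ and cup products take values in $M^\ast\otimes_AA\cong M^\ast\cong A\otimes_AM^\ast$). Equivalently, with graded transposes (for a map $T$ from a degree-$q$ space to a degree-$(q-p)$ space, $T^\ast(\lambda)=(-1)^{p(q-p)}\lambda\circ T$), $\eta_q\circ(f\underset{K}{\frown}-)^\ast=(-1)^{(q-p)p}(-\underset{K}{\smile}f)\circ\eta_{q-p}$ and $\eta_q\circ(-1)^{pq}(-\underset{K}{\frown}f)^\ast=(f\underset{K}{\smile}-)\circ\eta_{q-p}$.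 Consequently the induced isomorphism $H(\eta):H^\bullet(C)\to\mathrm{HK}^\bullet(A,M^\ast)$, with $C=\big(\bigoplus_p(M\otimes W_{\nu(p)})^\ast,\,b_K^\ast\big)$, $b_K^\ast(\phi)=-(-1)^p\phi\circ b_K$, is compatible in the same way with the actions of $\mathrm{HK}^\bullet(A)$, and it is natural in $M$.
   Context: $k$ field, $V$ a $k$-vector space, $N\ge 2$, $R\subseteq V^{\otimes N}$, $A=T(V)/(R)$. $W_0=k$, $W_p=V^{\otimes p}$ ($1\le p\le N-1$), $W_p=\bigcap_{i+N+j=p}V^{\otimes i}\otimes R\otimes V^{\otimes j}$ ($p\ge N$); $\nu(2p')=Np'$, $\nu(2p'+1)=Np'+1$. Elements of $W_p$ are written $x_1\dots x_p$ (a sum of such tensors), with sub-blocks understood as elements of the appropriate $W_r$; $x_i$ act on bimodules via images in $A$. $M^\ast=\mathrm{Hom}_k(M,k)$ has bimodule structure $(a.u.a')(m)=u(a'ma)$. Koszul chain and cochain differentials: chains $M\otimes W_{\nu(q)}$, for $q=2q'+1$: $b_K(m\otimes x_1\dots x_{Nq'+1})=mx_1\otimes x_2\dots x_{Nq'+1}-x_{Nq'+1}m\otimes x_1\dots x_{Nq'}$; for $q=2q'\ge2$: $b_K(m\otimes x_1\dots x_{Nq'})=\sum_{i=0}^{N-1}x_{i+Nq'-N+2}\dots x_{Nq'}mx_1\dots x_i\otimes x_{i+1}\dots x_{i+Nq'-N+1}$. Cochains $\mathrm{Hom}_k(W_{\nu(p)},P)$: for $p=2p'$: $b_K(f)(x_1\dots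 x_{Np'+1})=f(x_1\dots x_{Np'})x_{Np'+1}-x_1f(x_2\dots x_{Np'+1})$; for $p=2p'+1$: $b_K(f)(x_1\dots x_{N(p'+1)})=\sum_{i=0}^{N-1}x_1\dots x_if(x_{i+1}\dots x_{i+Np'+1})x_{i+Np'+2}\dots x_{N(p'+1)}$. $\mathrm{HK}^\bullet(A,P)$ is the cohomology, $\mathrm{HK}^\bullet(A)=\mathrm{HK}^\bullet(A,A)$. Cup product of $f:W_{\nu(p)}\to P$, $g:W_{\nu(q)}\to Q$: if $p,q$ not both odd, $(f\underset{K}{\smile}g)(x_1\dots x_{\nu(p+q)})=f(x_1\dots x_{\nu(p)})\otimes_Ag(x_{\nu(p)+1}\dots x_{\nu(p)+\nu(q)})$; if both odd, $(f\underset{K}{\smile}g)(x_1\dots x_{\nu(p+q)})=-\sum_{0\le i+j\le N-2}x_1\dots x_if(x_{i+1}\dots x_{i+\nu(p)})x_{i+\nu(p)+1}\dots x_{\nu(p)+N-j-2}\otimes_Ag(x_{\nu(p)+N-j-1}\dots x_{\nu(p)+\nu(q)+N-j-2})x_{\nu(p)+\nu(q)+N-j-1}\dots x_{\nu(p)+\nu(q)+N-2}$. Cap products of $f:W_{\nu(p)}\to A$ and $z=m\otimes x_1\dots x_{\nu(q)}$: if $p$ and $q-p$ not both odd, $f\underset{K}{\frown}z=f(x_{\nu(q-p)+1}\dots x_{\nu(q)})m\otimes x_1\dots x_{\nu(q-p)}$, $z\underset{K}{\frown}f=(-1)^{pq}mf(x_1\dots x_{\nu(p)})\otimes x_{\nu(p)+1}\dots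 x_{\nu(q)}$; if $p=2p'+1,q=2q'$: $f\underset{K}{\frown}z=-\sum_{0\le i+j\le N-2}x_{Nq'-Np'-N+i+2}\dots x_{Nq'-Np'-j-1}f(x_{Nq'-Np'-j}\dots x_{Nq'-j})x_{Nq'-j+1}\dots x_{Nq'}mx_1\dots x_i\otimes x_{i+1}\dots x_{i+Nq'-Np'-N+1}$, $z\underset{K}{\frown}f=\sum_{0\le i+j\le N-2}x_{Nq'-j+1}\dots x_{Nq'}mx_1\dots x_if(x_{i+1}\dots x_{Np'+i+1})x_{Np'+i+2}\dots x_{Np'+N-j-1}\otimes x_{Np'+N-j}\dots x_{Nq'-j}$. These products descend to (co)homology classes. *)

theory Defs
  imports Main
begin

text \<open>The k-vector space V is given by a basis indexed by the type 'b
(every vector space has a basis). Then V^{\<otimes>n} is identified with the finitely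
supported functions on words (lists over 'b) of length n; a word is the basis tensor
b_1 \<otimes> ... \<otimes> b_n. Likewise M \<otimes> V^{\<otimes>n} is identified with finitely supported
functions from words of length n to M. The k-algebra A is a ring with a central
structure map \<iota> : k \<rightarrow> A, and gen b is the image of the basis vector b in A.\<close>

definition supp :: "('b list \<Rightarrow> 'c::zero) \<Rightarrow> 'b list set" where
  "supp x = {w. x w \<noteq> 0}"

definition tens :: "nat \<Rightarrow> ('b list \<Rightarrow> 'k::field) set" where
  "tens n = {x. finite (supp x) \<and> (\<forall>w\<in>supp x. length w = n)}"

definition subspace_tens :: "nat \<Rightarrow> ('b list \<Rightarrow> 'k::field) set \<Rightarrow> bool" where
  "subspace_tens N R \<longleftrightarrow> R \<subseteq> tens N \<and> (\<lambda>_. 0) \<in> R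
     \<and> (\<forall>x\<in>R. \<forall>y\<in>R. (\<lambda>w. x w + y w) \<in> R) \<and> (\<forall>c. \<forall>x\<in>R. (\<lambda>w. c * x w) \<in> R)"

definition nu :: "nat \<Rightarrow> nat \<Rightarrow> nat" where
  "nu N p = (if even p then N * (p div 2) else N * (p div 2) + 1)"

text \<open>W_p: V^{\<otimes>p} for p < N, and the intersection of the V^i \<otimes> R \<otimes> V^j (i+N+j=p)
for p \<ge> N (an element lies in V^i \<otimes> R \<otimes> V^j iff all its slices at positions
i+1..i+N, with the outer basis words fixed, lie in R).\<close>
definition Wsp :: "nat \<Rightarrow> ('b list \<Rightarrow> 'k::field) set \<Rightarrow> nat \<Rightarrow> ('b list \<Rightarrow> 'k) set" where
  "Wsp N R p = (if p < N then tens p else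
     {x \<in> tens p. \<forall>i u v. i + N \<le> p \<and> length u = i \<and> length v = p - N - i
        \<longrightarrow> (\<lambda>s. x (u @ s @ v)) \<in> R})"

definition gw :: "('b \<Rightarrow> 'a::monoid_mult) \<Rightarrow> 'b list \<Rightarrow> 'a" where
  "gw gen w = prod_list (map gen w)"

definition kalg :: "('k::field \<Rightarrow> 'a::ring_1) \<Rightarrow> bool" where
  "kalg \<iota> \<longleftrightarrow> (\<forall>c d. \<iota> (c + d) = \<iota> c + \<iota> d) \<and> (\<forall>c d. \<iota> (c * d) = \<iota> c * \<iota> d)
     \<and> \<iota> 1 = 1 \<and> (\<forall>c a. \<iota> c * a = a * \<iota> c)"

definition evalT :: "('k::field \<Rightarrow> 'a::ring_1) \<Rightarrow> ('b \<Rightarrow> 'a) \<Rightarrow> ('b list \<Rightarrow> 'k) \<Rightarrow> 'a" where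
  "evalT \<iota> gen x = (\<Sum>w\<in>supp x. \<iota> (x w) * gw gen w)"

text \<open>u \<otimes> r \<otimes> v for basis words u, v and r \<in> V^{\<otimes>N}\<close>
definition ins :: "nat \<Rightarrow> 'b list \<Rightarrow> ('b list \<Rightarrow> 'k::field) \<Rightarrow> 'b list \<Rightarrow> 'b list \<Rightarrow> 'k" where
  "ins N u r v w = (if length w = length u + N + length v \<and> take (length u) w = u
       \<and> drop (length u + N) w = v then r (take N (drop (length u) w)) else 0)"

definition ideal_gen :: "nat \<Rightarrow> ('b list \<Rightarrow> 'k::field) set \<Rightarrow> ('b list \<Rightarrow> 'k) set" where
  "ideal_gen N R = {x. \<exists>L. (\<forall>(u, r, v)\<in>set L. r \<in> R)
       \<and> x = (\<lambda>w. \<Sum>(u, r, v)\<leftarrow>L. ins N u r v w)}"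

text \<open>A = T(V)/(R): the canonical map T(V) \<rightarrow> A is onto with kernel (R)\<close>
definition presents :: "nat \<Rightarrow> ('b list \<Rightarrow> 'k::field) set \<Rightarrow> ('k \<Rightarrow> 'a::ring_1) \<Rightarrow> ('b \<Rightarrow> 'a) \<Rightarrow> bool" where
  "presents N R \<iota> gen \<longleftrightarrow> kalg \<iota>
     \<and> (\<forall>a. \<exists>x. finite (supp x) \<and> evalT \<iota> gen x = a)
     \<and> (\<forall>x. finite (supp x) \<longrightarrow> (evalT \<iota> gen x = 0 \<longleftrightarrow> x \<in> ideal_gen N R))"

definition bimod :: "('k::field \<Rightarrow> 'a::ring_1) \<Rightarrow> ('a \<Rightarrow> 'm::ab_group_add \<Rightarrow> 'm) \<Rightarrow> ('m \<Rightarrow> 'a \<Rightarrow> 'm) \<Rightarrow> bool" where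
  "bimod \<iota> lm rm \<longleftrightarrow>
     (\<forall>m. lm 1 m = m) \<and> (\<forall>a b m. lm (a * b) m = lm a (lm b m))
   \<and> (\<forall>a b m. lm (a + b) m = lm a m + lm b m) \<and> (\<forall>a m n. lm a (m + n) = lm a m + lm a n)
   \<and> (\<forall>m. rm m 1 = m) \<and> (\<forall>a b m. rm m (a * b) = rm (rm m a) b)
   \<and> (\<forall>a b m. rm m (a + b) = rm m a + rm m b) \<and> (\<forall>a m n. rm (m + n) a = rm m a + rm n a)
   \<and> (\<forall>a b m. rm (lm a m) b = lm a (rm m b))
   \<and> (\<forall>c m. lm (\<iota> c) m = rm m (\<iota> c))"

definition lin_A :: "('k::field \<Rightarrow> 'a::ring_1) \<Rightarrow> ('b list \<Rightarrow> 'k) set \<Rightarrow> (('b list \<Rightarrow> 'k) \<Rightarrow> 'a) \<Rightarrow> bool" where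
  "lin_A \<iota> S f \<longleftrightarrow> (\<forall>x\<in>S. \<forall>y\<in>S. f (\<lambda>w. x w + y w) = f x + f y)
     \<and> (\<forall>c. \<forall>x\<in>S. f (\<lambda>w. c * x w) = \<iota> c * f x)"

definition mt :: "('k::field \<Rightarrow> 'a::ring_1) \<Rightarrow> ('a \<Rightarrow> 'm::ab_group_add \<Rightarrow> 'm) \<Rightarrow> 'm \<Rightarrow> ('b list \<Rightarrow> 'k) \<Rightarrow> 'b list \<Rightarrow> 'm" where
  "mt \<iota> lm m x = (\<lambda>w. lm (\<iota> (x w)) m)"

definition MT :: "('k::field \<Rightarrow> 'a::ring_1) \<Rightarrow> ('a \<Rightarrow> 'm::ab_group_add \<Rightarrow> 'm) \<Rightarrow> ('b list \<Rightarrow> 'k) set \<Rightarrow> ('b list \<Rightarrow> 'm) set" where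
  "MT \<iota> lm S = {z. \<exists>L. (\<forall>(m, x)\<in>set L. x \<in> S) \<and> z = (\<lambda>w. \<Sum>(m, x)\<leftarrow>L. mt \<iota> lm m x w)}"

definition lin_Mk :: "('k::field \<Rightarrow> 'a::ring_1) \<Rightarrow> ('a \<Rightarrow> 'm::ab_group_add \<Rightarrow> 'm) \<Rightarrow> ('b list \<Rightarrow> 'm) set \<Rightarrow> (('b list \<Rightarrow> 'm) \<Rightarrow> 'k) \<Rightarrow> bool" where
  "lin_Mk \<iota> lm S \<phi> \<longleftrightarrow> (\<forall>z\<in>S. \<forall>z'\<in>S. \<phi> (\<lambda>w. z w + z' w) = \<phi> z + \<phi> z')
     \<and> (\<forall>c. \<forall>z\<in>S. \<phi> (\<lambda>w. lm (\<iota> c) (z w)) = c * \<phi> z)"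

text \<open>eta(\<phi>)(x)(m) = \<phi>(m \<otimes> x); M^* is represented by functions 'm \<Rightarrow> 'k\<close>
definition eta :: "('k::field \<Rightarrow> 'a::ring_1) \<Rightarrow> ('a \<Rightarrow> 'm::ab_group_add \<Rightarrow> 'm) \<Rightarrow> (('b list \<Rightarrow> 'm) \<Rightarrow> 'k) \<Rightarrow> ('b list \<Rightarrow> 'k) \<Rightarrow> 'm \<Rightarrow> 'k" where
  "eta \<iota> lm \<phi> x m = \<phi> (mt \<iota> lm m x)"

definition negp :: "nat \<Rightarrow> 'c::uminus \<Rightarrow> 'c" where
  "negp n v = (if even n then v else - v)"

definition outer3 :: "('b list \<Rightarrow> 'k::zero) \<Rightarrow> nat \<Rightarrow> nat \<Rightarrow> nat \<Rightarrow> nat \<Rightarrow> ('b list \<times> 'b list \<times> 'b list) set" where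
  "outer3 x i l c j = (\<lambda>w. (take i w, take c (drop (i + l) w), drop (length w - j) w)) ` supp x"

text \<open>Contraction of a bilinear \<beta> on Sa \<times> Sb with an element y of Sa \<otimes> Sb \<subseteq> V^{\<otimes>la} \<otimes> V^{\<otimes>lb}:
 pick a representation y = \<Sum> h_k \<otimes> t_k with h_k \<in> Sa, t_k \<in> Sb and return \<Sum> \<beta> h_k t_k.\<close>
definition contract2 :: "nat \<Rightarrow> ('b list \<Rightarrow> 'k::field) set \<Rightarrow> ('b list \<Rightarrow> 'k) set
    \<Rightarrow> (('b list \<Rightarrow> 'k) \<Rightarrow> ('b list \<Rightarrow> 'k) \<Rightarrow> 'k) \<Rightarrow> ('b list \<Rightarrow> 'k) \<Rightarrow> 'k" where
  "contract2 la Sa Sb \<beta> y = (let L = (SOME L. (\<forall>(h, t)\<in>set L. h \<in> Sa \<and> t \<in> Sb)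
        \<and> y = (\<lambda>w. \<Sum>(h, t)\<leftarrow>L. h (take la w) * t (drop la w)))
     in \<Sum>(h, t)\<leftarrow>L. \<beta> h t)"

definition capL :: "nat \<Rightarrow> ('a::ring_1 \<Rightarrow> 'm::ab_group_add \<Rightarrow> 'm) \<Rightarrow> ('m \<Rightarrow> 'a \<Rightarrow> 'm) \<Rightarrow> ('b \<Rightarrow> 'a)
    \<Rightarrow> (('b list \<Rightarrow> 'k::field) \<Rightarrow> 'a) \<Rightarrow> nat \<Rightarrow> nat \<Rightarrow> 'm \<Rightarrow> ('b list \<Rightarrow> 'k) \<Rightarrow> 'b list \<Rightarrow> 'm" where
  "capL N lm rm gen f p q m x = (\<lambda>e. if length e \<noteq> nu N (q - p) then 0
     else if \<not> (odd p \<and> odd (q - p)) then lm (f (\<lambda>s. x (e @ s))) m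
     else - (\<Sum>(i, j)\<in>{(i, j). i + j \<le> N - 2}.
              \<Sum>(I, C, J)\<in>outer3 x i (nu N (q - p)) (N - j - 2 - i) j.
                lm (gw gen C * f (\<lambda>s. x (I @ e @ C @ s @ J)) * gw gen J) (rm m (gw gen I))))"

definition capR :: "nat \<Rightarrow> ('a::ring_1 \<Rightarrow> 'm::ab_group_add \<Rightarrow> 'm) \<Rightarrow> ('m \<Rightarrow> 'a \<Rightarrow> 'm) \<Rightarrow> ('b \<Rightarrow> 'a)
    \<Rightarrow> (('b list \<Rightarrow> 'k::field) \<Rightarrow> 'a) \<Rightarrow> nat \<Rightarrow> nat \<Rightarrow> 'm \<Rightarrow> ('b list \<Rightarrow> 'k) \<Rightarrow> 'b list \<Rightarrow> 'm" where
  "capR N lm rm gen f p q m x = (\<lambda>e. if length e \<noteq> nu N (q - p) then 0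
     else if \<not> (odd p \<and> odd (q - p)) then negp (p * q) (rm m (f (\<lambda>s. x (s @ e))))
     else (\<Sum>(i, j)\<in>{(i, j). i + j \<le> N - 2}.
              \<Sum>(I, C, J)\<in>outer3 x i (nu N p) (N - j - 2 - i) j.
                lm (gw gen J) (rm m (gw gen I * f (\<lambda>s. x (I @ s @ C @ e @ J)) * gw gen C))))"

text \<open>The bimodule structure of M^* is (a.u.a')(m) = u(a' m a).\<close>
definition cupMA :: "nat \<Rightarrow> ('b list \<Rightarrow> 'k::field) set \<Rightarrow> ('a::ring_1 \<Rightarrow> 'm::ab_group_add \<Rightarrow> 'm) \<Rightarrow> ('m \<Rightarrow> 'a \<Rightarrow> 'm)
    \<Rightarrow> ('b \<Rightarrow> 'a) \<Rightarrow> (('b list \<Rightarrow> 'k) \<Rightarrow> 'm \<Rightarrow> 'k) \<Rightarrow> nat \<Rightarrow> (('b list \<Rightarrow> 'k) \<Rightarrow> 'a) \<Rightarrow> nat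
    \<Rightarrow> ('b list \<Rightarrow> 'k) \<Rightarrow> 'm \<Rightarrow> 'k" where
  "cupMA N R lm rm gen u a g b x m = (let la = nu N a; Sa = Wsp N R la; Sb = Wsp N R (nu N b) in
     if \<not> (odd a \<and> odd b) then contract2 la Sa Sb (\<lambda>h t. u h (lm (g t) m)) x
     else - (\<Sum>(i, j)\<in>{(i, j). i + j \<le> N - 2}.
              \<Sum>(I, C, E)\<in>outer3 x i la (N - j - 2 - i) j.
                contract2 la Sa Sb (\<lambda>h t. u h (lm (gw gen C * g t * gw gen E) (rm m (gw gen I))))
                  (\<lambda>s. x (I @ take la s @ C @ drop la s @ E))))"

definition cupAM :: "nat \<Rightarrow> ('b list \<Rightarrow> 'k::field) set \<Rightarrow> ('a::ring_1 \<Rightarrow> 'm::ab_group_add \<Rightarrow> 'm) \<Rightarrow> ('m \<Rightarrow> 'a \<Rightarrow> 'm)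
    \<Rightarrow> ('b \<Rightarrow> 'a) \<Rightarrow> (('b list \<Rightarrow> 'k) \<Rightarrow> 'a) \<Rightarrow> nat \<Rightarrow> (('b list \<Rightarrow> 'k) \<Rightarrow> 'm \<Rightarrow> 'k) \<Rightarrow> nat
    \<Rightarrow> ('b list \<Rightarrow> 'k) \<Rightarrow> 'm \<Rightarrow> 'k" where
  "cupAM N R lm rm gen g a u b x m = (let la = nu N a; Sa = Wsp N R la; Sb = Wsp N R (nu N b) in
     if \<not> (odd a \<and> odd b) then contract2 la Sa Sb (\<lambda>h t. u t (rm m (g h))) x
     else - (\<Sum>(i, j)\<in>{(i, j). i + j \<le> N - 2}.
              \<Sum>(I, C, E)\<in>outer3 x i la (N - j - 2 - i) j.
                contract2 la Sa Sb (\<lambda>h t. u t (lm (gw gen E) (rm m (gw gen I * g h * gw gen C))))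
                  (\<lambda>s. x (I @ take la s @ C @ drop la s @ E))))"

end

theory Submission
  imports Defs
begin

definition linF :: "('k::field \<Rightarrow> 'a::ring_1) \<Rightarrow> ('a \<Rightarrow> 'm::ab_group_add \<Rightarrow> 'm) \<Rightarrow> ('b list \<Rightarrow> 'k) set \<Rightarrow> (('b list \<Rightarrow> 'k) \<Rightarrow> 'm) \<Rightarrow> bool" where
 "linF \<iota> lm S F \<longleftrightarrow> (\<forall>x\<in>S. \<forall>y\<in>S. F (\<lambda>w. x w + y w) = F x + F y) \<and> (\<forall>c. \<forall>x\<in>S. F (\<lambda>w. c * x w) = lm (\<iota> c) (F x))"

definition closedS :: "('b list \<Rightarrow> 'k::field) set \<Rightarrow> bool" where
 "closedS S \<longleftrightarrow> (\<lambda>_. 0) \<in> S \<and> (\<forall>x\<in>S. \<forall>y\<in>S. (\<lambda>w. x w + y w) \<in> S) \<and> (\<forall>c. \<forall>x\<in>S. (\<lambda>w. c * x w) \<in> S)"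

lemma tens_zero: "x \<in> tens n \<Longrightarrow> length w \<noteq> n \<Longrightarrow> x w = 0"
  unfolding tens_def supp_def by auto

lemma Wsp_tens: "Wsp N R n \<subseteq> tens n"
  unfolding Wsp_def by auto

lemma tens_closed: "closedS (tens n :: ('b list \<Rightarrow> 'k::field) set)"
proof -
  have a: "supp (\<lambda>w. x w + y w) \<subseteq> supp x \<union> supp y" for x y :: "'b list \<Rightarrow> 'k::field"
    unfolding supp_def by auto
  have b: "supp (\<lambda>w. c * x w) \<subseteq> supp x" for c and x :: "'b list \<Rightarrow> 'k::field"
    unfolding supp_def by auto
  have 0: "(\<lambda>_. 0) \<in> tens n" by (simp add: tens_def supp_def)
  have 1: "(\<lambda>w. x w + y w) \<in> tens n" if "x \<in> tens n" "y \<in> tens n" for x y :: "'b list \<Rightarrow> 'k"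
  proof -
    have "finite (supp x \<union> supp y)" using that by (simp add: tens_def)
    then have "finite (supp (\<lambda>w. x w + y w))" using finite_subset[OF a[of x y]] by blast
    moreover have "\<forall>w\<in>supp (\<lambda>w. x w + y w). length w = n" using a[of x y] that unfolding tens_def by blast
    ultimately show ?thesis unfolding tens_def by blast
  qed
  have 2: "(\<lambda>w. c * x w) \<in> tens n" if "x \<in> tens n" for c and x :: "'b list \<Rightarrow> 'k"
  proof -
    have "finite (supp x)" using that by (simp add: tens_def)
    then have "finite (supp (\<lambda>w. c * x w))" using finite_subset[OF b[of c x]] by blast
    moreover have "\<forall>w\<in>supp (\<lambda>w. c * x w). length w = n" using b[of c x] that unfolding tens_def by blast
    ultimately show ?thesis unfolding tens_def by blast
  qed
  show ?thesis unfolding closedS_def using 0 1 2 by blast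
qed

lemma Wsp_closed:
  assumes "subspace_tens N R" shows "closedS (Wsp N R n)"
proof -
  have T: "closedS (tens n)" by (rule tens_closed)
  have T0: "(\<lambda>_. 0) \<in> tens n" and Ta: "\<And>x y. x \<in> tens n \<Longrightarrow> y \<in> tens n \<Longrightarrow> (\<lambda>w. x w + y w) \<in> tens n"
    and Ts: "\<And>c x. x \<in> tens n \<Longrightarrow> (\<lambda>w. c * x w) \<in> tens n" using T unfolding closedS_def by auto
  have R0: "(\<lambda>_. 0) \<in> R" and Ra: "\<And>x y. x\<in>R \<Longrightarrow> y\<in>R \<Longrightarrow> (\<lambda>w. x w + y w) \<in> R"
      and Rs: "\<And>c x. x\<in>R \<Longrightarrow> (\<lambda>w. c * x w) \<in> R" using assms unfolding subspace_tens_def by auto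
  show ?thesis
  proof (cases "n < N")
    case True then show ?thesis using T by (simp add: Wsp_def)
  next
    case False
    show ?thesis unfolding closedS_def Wsp_def using False
    proof (simp only: if_False, intro conjI ballI allI)
      show "(\<lambda>_. 0) \<in> {x \<in> tens n. \<forall>i u v. i + N \<le> n \<and> length u = i \<and> length v = n - N - i \<longrightarrow> (\<lambda>s. x (u @ s @ v)) \<in> R}"
        using T0 R0 by simp
    next
      fix x y assume x: "x \<in> {x \<in> tens n. \<forall>i u v. i + N \<le> n \<and> length u = i \<and> length v = n - N - i \<longrightarrow> (\<lambda>s. x (u @ s @ v)) \<in> R}"
        and y: "y \<in> {x \<in> tens n. \<forall>i u v. i + N \<le> n \<and> length u = i \<and> length v = n - N - i \<longrightarrow> (\<lambda>s. x (u @ s @ v)) \<in> R}"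
      show "(\<lambda>w. x w + y w) \<in> {x \<in> tens n. \<forall>i u v. i + N \<le> n \<and> length u = i \<and> length v = n - N - i \<longrightarrow> (\<lambda>s. x (u @ s @ v)) \<in> R}"
        using x y by (simp add: Ta Ra)
    next
      fix c x assume x: "x \<in> {x \<in> tens n. \<forall>i u v. i + N \<le> n \<and> length u = i \<and> length v = n - N - i \<longrightarrow> (\<lambda>s. x (u @ s @ v)) \<in> R}"
      show "(\<lambda>w. c * x w) \<in> {x \<in> tens n. \<forall>i u v. i + N \<le> n \<and> length u = i \<and> length v = n - N - i \<longrightarrow> (\<lambda>s. x (u @ s @ v)) \<in> R}"
        using x by (simp add: Ts Rs)
    qed
  qed
qed

lemma slice_Wsp:
  assumes x: "x \<in> Wsp N R n" and len: "length P + l + length Q = n"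
  shows "(\<lambda>s. x (P @ s @ Q)) \<in> Wsp N R l"
proof -
  have xt: "x \<in> tens n" using x Wsp_tens by blast
  have fin: "finite (supp (\<lambda>s. x (P @ s @ Q)))"
  proof -
    have "supp (\<lambda>s. x (P @ s @ Q)) = (\<lambda>s. P @ s @ Q) -` supp x" unfolding supp_def by auto
    moreover have "finite ((\<lambda>s. P @ s @ Q) -` supp x)"
      using xt unfolding tens_def by (intro finite_vimageI) (auto simp: inj_on_def)
    ultimately show ?thesis by simp
  qed
  have lens: "\<forall>w\<in>supp (\<lambda>s. x (P @ s @ Q)). length w = l"
    using xt len unfolding tens_def supp_def by fastforce
  have t: "(\<lambda>s. x (P @ s @ Q)) \<in> tens l" using fin lens unfolding tens_def by simp
  show ?thesis
  proof (cases "l < N")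
    case True then show ?thesis using t by (simp add: Wsp_def)
  next
    case False
    then have nN: "\<not> n < N" using len by auto
    have H: "(\<lambda>s'. x (P @ (u @ s' @ v) @ Q)) \<in> R"
      if "i + N \<le> l" "length u = i" "length v = l - N - i" for i u v
    proof -
      have "(\<lambda>s'. x ((P @ u) @ s' @ (v @ Q))) \<in> R"
      proof -
        have "length (P @ u) + N \<le> n" "length (v @ Q) = n - N - length (P @ u)"
          using that len by auto
        moreover have "\<forall>i u v. i + N \<le> n \<and> length u = i \<and> length v = n - N - i \<longrightarrow> (\<lambda>s. x (u @ s @ v)) \<in> R"
          using x nN unfolding Wsp_def by auto
        ultimately show ?thesis by blast
      qed
      then show ?thesis by simp
    qed
    show ?thesis unfolding Wsp_def using t False H by auto
  qed
qed

lemma closed_scale: "closedS S \<Longrightarrow> x \<in> S \<Longrightarrow> (\<lambda>w. c * x w) \<in> S"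
  unfolding closedS_def by blast

lemma closed_add: "closedS S \<Longrightarrow> x \<in> S \<Longrightarrow> y \<in> S \<Longrightarrow> (\<lambda>w. x w + y w) \<in> S"
  unfolding closedS_def by blast

lemma closed_zero: "closedS S \<Longrightarrow> (\<lambda>_. 0) \<in> S"
  unfolding closedS_def by blast

lemma closed_sub:
  assumes "closedS S" "x \<in> S" "y \<in> S"
  shows "(\<lambda>w. x w - c * y w) \<in> S"
  using closed_add[OF assms(1) assms(2) closed_scale[OF assms(1) assms(3), of "- c"]] by simp

lemma decomp:
  fixes z :: "'b list \<Rightarrow> 'b list \<Rightarrow> 'k::field"
  assumes SA: "closedS Sa" and SB: "closedS Sb"
    and "finite {u. z u \<noteq> (\<lambda>_. 0)}"
    and "\<forall>u. z u \<in> Sb" and "\<forall>v. (\<lambda>u. z u v) \<in> Sa"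
  shows "\<exists>L. (\<forall>(h,t)\<in>set L. h \<in> Sa \<and> t \<in> Sb) \<and> (\<forall>u v. z u v = (\<Sum>(h,t)\<leftarrow>L. h u * t v))"
  using assms(3-5)
proof (induction "card {u. z u \<noteq> (\<lambda>_. 0)}" arbitrary: z rule: less_induct)
  case less
  show ?case
  proof (cases "{u. z u \<noteq> (\<lambda>_. 0)} = {}")
    case True
    then have "z u v = 0" for u v by (metis (mono_tags, lifting) empty_Collect_eq)
    then show ?thesis by (intro exI[of _ "[]"]) simp
  next
    case False
    then obtain u0 where u0: "z u0 \<noteq> (\<lambda>_. 0)" by blast
    then obtain v0 where v0: "z u0 v0 \<noteq> 0" by blast
    define c where "c = z u0 v0"
    define t where "t = z u0"
    define h where "h = (\<lambda>u. (1 / c) * z u v0)"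
    define z' where "z' = (\<lambda>u v. z u v - h u * t v)"
    have hS: "h \<in> Sa" unfolding h_def using closed_scale[OF SA] less.prems by blast
    have tS: "t \<in> Sb" unfolding t_def using less.prems by blast
    have rows: "\<forall>u. z' u \<in> Sb"
    proof
      fix u
      have "(\<lambda>v. z u v - h u * t v) \<in> Sb" using closed_sub[OF SB] less.prems tS by blast
      then show "z' u \<in> Sb" unfolding z'_def by simp
    qed
    have cols: "\<forall>v. (\<lambda>u. z' u v) \<in> Sa"
    proof
      fix v
      have "(\<lambda>u. z u v - (t v / c) * z u v0) \<in> Sa" using closed_sub[OF SA] less.prems by blast
      moreover have "(\<lambda>u. z u v - (t v / c) * z u v0) = (\<lambda>u. z' u v)"
        unfolding z'_def h_def by (simp add: algebra_simps)
      ultimately show "(\<lambda>u. z' u v) \<in> Sa" by simp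
    qed
    have sub: "{u. z' u \<noteq> (\<lambda>_. 0)} \<subseteq> {u. z u \<noteq> (\<lambda>_. 0)} - {u0}"
    proof
      fix u assume "u \<in> {u. z' u \<noteq> (\<lambda>_. 0)}"
      then have nz: "z' u \<noteq> (\<lambda>_. 0)" by simp
      have "z u \<noteq> (\<lambda>_. 0)"
      proof
        assume "z u = (\<lambda>_. 0)"
        then have "z u v = 0" for v by metis
        then have "z' u = (\<lambda>_. 0)" unfolding z'_def h_def by simp
        then show False using nz by simp
      qed
      moreover have "u \<noteq> u0"
      proof
        assume "u = u0"
        then have "z' u = (\<lambda>_. 0)" unfolding z'_def h_def t_def c_def using v0 by (auto simp: fun_eq_iff)
        then show False using nz by simp
      qed
      ultimately show "u \<in> {u. z u \<noteq> (\<lambda>_. 0)} - {u0}" by simp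
    qed
    have fin': "finite {u. z' u \<noteq> (\<lambda>_. 0)}" using sub less.prems(1) finite_subset by blast
    have "card {u. z' u \<noteq> (\<lambda>_. 0)} < card {u. z u \<noteq> (\<lambda>_. 0)}"
    proof -
      have "card {u. z' u \<noteq> (\<lambda>_. 0)} \<le> card ({u. z u \<noteq> (\<lambda>_. 0)} - {u0})"
        using sub less.prems(1) by (intro card_mono) auto
      also have "\<dots> < card {u. z u \<noteq> (\<lambda>_. 0)}"
        using less.prems(1) u0 by (intro card_Diff1_less) auto
      finally show ?thesis .
    qed
    from less.hyps[OF this fin' rows cols] obtain L where
      L: "\<forall>(h,t)\<in>set L. h \<in> Sa \<and> t \<in> Sb" "\<forall>u v. z' u v = (\<Sum>(h,t)\<leftarrow>L. h u * t v)" by blast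
    show ?thesis
    proof (intro exI[of _ "(h,t) # L"] conjI)
      show "\<forall>(h,t)\<in>set ((h,t) # L). h \<in> Sa \<and> t \<in> Sb" using L(1) hS tS by auto
      show "\<forall>u v. z u v = (\<Sum>(h,t)\<leftarrow>(h,t) # L. h u * t v)"
        using L(2) unfolding z'_def by (simp add: algebra_simps)
    qed
  qed
qed

lemma kalg_zero: "kalg \<iota> \<Longrightarrow> \<iota> 0 = 0"
proof -
  assume "kalg \<iota>"
  then have "\<iota> (0 + 0) = \<iota> 0 + \<iota> 0" unfolding kalg_def by blast
  then show ?thesis by simp
qed

lemma kalg_neg: "kalg \<iota> \<Longrightarrow> \<iota> (- c) = - \<iota> c"
proof -
  assume k: "kalg \<iota>"
  then have "\<iota> (c + - c) = \<iota> c + \<iota> (- c)" unfolding kalg_def by blast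
  then have "\<iota> c + \<iota> (- c) = 0" using kalg_zero[OF k] by simp
  then show ?thesis by (simp add: eq_neg_iff_add_eq_0 add.commute)
qed

lemma bimod_lm0: "bimod \<iota> lm rm \<Longrightarrow> lm 0 v = 0"
proof -
  assume "bimod \<iota> lm rm"
  then have "\<forall>a b m. lm (a + b) m = lm a m + lm b m" unfolding bimod_def by (elim conjE) assumption
  then have "lm (0 + 0) v = lm 0 v + lm 0 v" by blast
  then show ?thesis by simp
qed

lemma bimod_lmneg: "bimod \<iota> lm rm \<Longrightarrow> lm (- a) v = - lm a v"
proof -
  assume k: "bimod \<iota> lm rm"
  then have "\<forall>a b m. lm (a + b) m = lm a m + lm b m" unfolding bimod_def by (elim conjE) assumption
  then have "lm (a + - a) v = lm a v + lm (- a) v" by blast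
  then have "lm a v + lm (- a) v = 0" using bimod_lm0[OF k] by simp
  then show ?thesis by (simp add: eq_neg_iff_add_eq_0 add.commute)
qed

lemma bimod_lm_m0: "bimod \<iota> lm rm \<Longrightarrow> lm a 0 = 0"
proof -
  assume "bimod \<iota> lm rm"
  then have "\<forall>a m n. lm a (m + n) = lm a m + lm a n" unfolding bimod_def by (elim conjE) assumption
  then have "lm a (0 + 0) = lm a 0 + lm a 0" by blast
  then show ?thesis by simp
qed

lemma MT_mt: "x \<in> S \<Longrightarrow> mt \<iota> lm m x \<in> MT \<iota> lm S"
  unfolding MT_def by (intro CollectI exI[of _ "[(m, x)]"]) auto

lemma MT_zero: "(\<lambda>_. 0) \<in> MT \<iota> lm S"
  unfolding MT_def by (intro CollectI exI[of _ "[]"]) auto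

lemma MT_add: "z \<in> MT \<iota> lm S \<Longrightarrow> z' \<in> MT \<iota> lm S \<Longrightarrow> (\<lambda>w. z w + z' w) \<in> MT \<iota> lm S"
  unfolding MT_def
proof (elim CollectE exE conjE, intro CollectI)
  fix L L'
  assume "\<forall>(m, x)\<in>set L. x \<in> S" "z = (\<lambda>w. \<Sum>(m, x)\<leftarrow>L. mt \<iota> lm m x w)"
    "\<forall>(m, x)\<in>set L'. x \<in> S" "z' = (\<lambda>w. \<Sum>(m, x)\<leftarrow>L'. mt \<iota> lm m x w)"
  then show "\<exists>L. (\<forall>(m, x)\<in>set L. x \<in> S) \<and> (\<lambda>w. z w + z' w) = (\<lambda>w. \<Sum>(m, x)\<leftarrow>L. mt \<iota> lm m x w)"
    by (intro exI[of _ "L @ L'"]) auto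
qed

lemma phi_zero: "lin_Mk \<iota> lm (MT \<iota> lm S) \<phi> \<Longrightarrow> \<phi> (\<lambda>_. 0) = 0"
proof -
  assume "lin_Mk \<iota> lm (MT \<iota> lm S) \<phi>"
  then have "\<forall>z\<in>MT \<iota> lm S. \<forall>z'\<in>MT \<iota> lm S. \<phi> (\<lambda>w. z w + z' w) = \<phi> z + \<phi> z'"
    unfolding lin_Mk_def by (elim conjE) assumption
  then have H: "\<phi> (\<lambda>w. z w + z' w) = \<phi> z + \<phi> z'" if "z \<in> MT \<iota> lm S" "z' \<in> MT \<iota> lm S" for z z'
    using that by blast
  from H[OF MT_zero MT_zero] have "\<phi> (\<lambda>_. 0) = \<phi> (\<lambda>_. 0) + \<phi> (\<lambda>_. 0)" by (simp only: add_0)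
  then show ?thesis by (metis add_cancel_right_right)
qed

lemma phi_add: "lin_Mk \<iota> lm (MT \<iota> lm S) \<phi> \<Longrightarrow> z \<in> MT \<iota> lm S \<Longrightarrow> z' \<in> MT \<iota> lm S \<Longrightarrow>
   \<phi> (\<lambda>w. z w + z' w) = \<phi> z + \<phi> z'"
  unfolding lin_Mk_def by blast

lemma phi_neg:
  assumes "lin_Mk \<iota> lm (MT \<iota> lm S) \<phi>" "z \<in> MT \<iota> lm S" "kalg \<iota>" "bimod \<iota> lm rm"
  shows "\<phi> (\<lambda>w. - z w) = - \<phi> z"
proof -
  have "\<phi> (\<lambda>w. lm (\<iota> (-1)) (z w)) = (-1) * \<phi> z" using assms(1,2) unfolding lin_Mk_def by blast
  moreover have "lm (\<iota> (-1)) v = - v" for v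
  proof -
    have "\<iota> (-1) = - 1" using kalg_neg[OF assms(3), of 1] assms(3) unfolding kalg_def by simp
    moreover have "\<forall>m. lm 1 m = m" using assms(4) unfolding bimod_def by (elim conjE) assumption
    then have "lm 1 v = v" by blast
    ultimately show ?thesis using bimod_lmneg[OF assms(4), of 1 v] by simp
  qed
  ultimately show ?thesis by simp
qed

lemma phi_sum_pairs:
  assumes phi: "lin_Mk \<iota> lm (MT \<iota> lm S) \<phi>"
  shows "(\<forall>(h,t)\<in>set L. g h t \<in> MT \<iota> lm S) \<Longrightarrow>
    (\<lambda>e. \<Sum>(h,t)\<leftarrow>L. g h t e) \<in> MT \<iota> lm S \<and> \<phi> (\<lambda>e. \<Sum>(h,t)\<leftarrow>L. g h t e) = (\<Sum>(h,t)\<leftarrow>L. \<phi> (g h t))"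
proof (induction L)
  case Nil
  then show ?case using MT_zero phi_zero[OF phi] by simp
next
  case (Cons a L)
  obtain h t where a: "a = (h, t)" by fastforce
  have g: "g h t \<in> MT \<iota> lm S" using Cons.prems a by auto
  have IH: "(\<lambda>e. \<Sum>(h,t)\<leftarrow>L. g h t e) \<in> MT \<iota> lm S \<and> \<phi> (\<lambda>e. \<Sum>(h,t)\<leftarrow>L. g h t e) = (\<Sum>(h,t)\<leftarrow>L. \<phi> (g h t))"
    using Cons by auto
  show ?case using MT_add[OF g IH[THEN conjunct1]] phi_add[OF phi g IH[THEN conjunct1]] IH a by simp
qed

lemma phi_sum_set:
  assumes phi: "lin_Mk \<iota> lm (MT \<iota> lm S) \<phi>" and fin: "finite A"
  shows "(\<forall>a\<in>A. g a \<in> MT \<iota> lm S) \<Longrightarrow>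
    (\<lambda>e. \<Sum>a\<in>A. g a e) \<in> MT \<iota> lm S \<and> \<phi> (\<lambda>e. \<Sum>a\<in>A. g a e) = (\<Sum>a\<in>A. \<phi> (g a))"
  using fin
proof (induction A rule: finite_induct)
  case empty
  then show ?case using MT_zero phi_zero[OF phi] by simp
next
  case (insert a A)
  have g: "g a \<in> MT \<iota> lm S" using insert by auto
  have IH: "(\<lambda>e. \<Sum>a\<in>A. g a e) \<in> MT \<iota> lm S \<and> \<phi> (\<lambda>e. \<Sum>a\<in>A. g a e) = (\<Sum>a\<in>A. \<phi> (g a))"
    using insert by auto
  show ?case using MT_add[OF g IH[THEN conjunct1]] phi_add[OF phi g IH[THEN conjunct1]] IH insert by simp
qed

lemma linF_zero: "linF \<iota> lm S F \<Longrightarrow> closedS S \<Longrightarrow> F (\<lambda>_. 0) = 0"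
proof -
  assume "linF \<iota> lm S F" "closedS S"
  then have "\<forall>x\<in>S. \<forall>y\<in>S. F (\<lambda>w. x w + y w) = F x + F y" unfolding linF_def by (elim conjE) assumption
  then have H: "F (\<lambda>w. x w + y w) = F x + F y" if "x \<in> S" "y \<in> S" for x y
    using that by blast
  from H[OF closed_zero[OF \<open>closedS S\<close>] closed_zero[OF \<open>closedS S\<close>]]
  have "F (\<lambda>_. 0) = F (\<lambda>_. 0) + F (\<lambda>_. 0)" by (simp only: add_0)
  then show ?thesis by (metis add_cancel_right_right)
qed

lemma linF_sum:
  assumes F: "linF \<iota> lm S F" and S: "closedS S"
  shows "(\<forall>(h,t)\<in>set L. r h t \<in> S) \<Longrightarrow>
    (\<lambda>s. \<Sum>(h,t)\<leftarrow>L. c h t * r h t s) \<in> S \<and>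
    F (\<lambda>s. \<Sum>(h,t)\<leftarrow>L. c h t * r h t s) = (\<Sum>(h,t)\<leftarrow>L. lm (\<iota> (c h t)) (F (r h t)))"
proof (induction L)
  case Nil
  then show ?case using closed_zero[OF S] linF_zero[OF F S] by simp
next
  case (Cons a L)
  obtain h t where a: "a = (h, t)" by fastforce
  have r: "r h t \<in> S" using Cons.prems a by auto
  have cr: "(\<lambda>s. c h t * r h t s) \<in> S" using closed_scale[OF S r] .
  have IH: "(\<lambda>s. \<Sum>(h,t)\<leftarrow>L. c h t * r h t s) \<in> S \<and>
    F (\<lambda>s. \<Sum>(h,t)\<leftarrow>L. c h t * r h t s) = (\<Sum>(h,t)\<leftarrow>L. lm (\<iota> (c h t)) (F (r h t)))"
    using Cons by auto
  have Fa: "F (\<lambda>w. x w + y w) = F x + F y" if "x \<in> S" "y \<in> S" for x y using F that unfolding linF_def by blast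
  have Fs: "F (\<lambda>w. c * x w) = lm (\<iota> c) (F x)" if "x \<in> S" for c x using F that unfolding linF_def by blast
  show ?case using closed_add[OF S cr IH[THEN conjunct1]] Fa[OF cr IH[THEN conjunct1]] Fs[OF r] IH a by simp
qed

lemma sum_list_zero_pairs: "(\<forall>(h,t)\<in>set L. g h t = 0) \<Longrightarrow> (\<Sum>(h,t)\<leftarrow>L. g h t) = (0::'c::comm_monoid_add)"
  by (induction L) auto

lemma contract2_eq:
  assumes "\<exists>L. (\<forall>(h,t)\<in>set L. h \<in> Sa \<and> t \<in> Sb) \<and> y = (\<lambda>w. \<Sum>(h,t)\<leftarrow>L. h (take la w) * t (drop la w))"
  obtains L where "\<forall>(h,t)\<in>set L. h \<in> Sa \<and> t \<in> Sb" "y = (\<lambda>w. \<Sum>(h,t)\<leftarrow>L. h (take la w) * t (drop la w))"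
    "contract2 la Sa Sb \<beta> y = (\<Sum>(h,t)\<leftarrow>L. \<beta> h t)"
proof -
  let ?L = "SOME L. (\<forall>(h,t)\<in>set L. h \<in> Sa \<and> t \<in> Sb) \<and> y = (\<lambda>w. \<Sum>(h,t)\<leftarrow>L. h (take la w) * t (drop la w))"
  have "(\<forall>(h,t)\<in>set ?L. h \<in> Sa \<and> t \<in> Sb) \<and> y = (\<lambda>w. \<Sum>(h,t)\<leftarrow>?L. h (take la w) * t (drop la w))"
    using someI_ex[OF assms] .
  moreover have "contract2 la Sa Sb \<beta> y = (\<Sum>(h,t)\<leftarrow>?L. \<beta> h t)"
    unfolding contract2_def Let_def ..
  ultimately show ?thesis using that by blast
qed

lemma core_common:
  assumes SR: "subspace_tens N R" and x: "x \<in> Wsp N R n"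
    and len: "length I + la + length C + lb + length J = n"
  shows "\<exists>L. (\<forall>(h,t)\<in>set L. h \<in> Wsp N R la \<and> t \<in> Wsp N R lb) \<and>
     (\<lambda>s. x (I @ take la s @ C @ drop la s @ J)) = (\<lambda>w. \<Sum>(h,t)\<leftarrow>L. h (take la w) * t (drop la w))"
proof -
  have xt: "x \<in> tens n" using x Wsp_tens by blast
  define z where "z = (\<lambda>u v. if length u = la \<and> length v = lb then x (I @ u @ C @ v @ J) else 0)"
  have zeq: "z u v = x (I @ u @ C @ v @ J)" if "length u = la \<or> length v = lb" for u v
  proof (cases "length u = la \<and> length v = lb")
    case True then show ?thesis unfolding z_def by simp
  next
    case False
    then have "length (I @ u @ C @ v @ J) \<noteq> n" using that len by auto
    then show ?thesis using tens_zero[OF xt] False unfolding z_def by simp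
  qed
  have SA: "closedS (Wsp N R la)" and SB: "closedS (Wsp N R lb)" using Wsp_closed[OF SR] by auto
  have rows: "\<forall>u. z u \<in> Wsp N R lb"
  proof
    fix u show "z u \<in> Wsp N R lb"
    proof (cases "length u = la")
      case True
      then have "z u = (\<lambda>v. x ((I @ u @ C) @ v @ J))" using zeq by (auto simp: fun_eq_iff)
      moreover have "(\<lambda>v. x ((I @ u @ C) @ v @ J)) \<in> Wsp N R lb"
        by (rule slice_Wsp[OF x]) (use len True in simp)
      ultimately show ?thesis by simp
    next
      case False
      then have "z u = (\<lambda>_. 0)" unfolding z_def by (simp add: fun_eq_iff)
      then show ?thesis using closed_zero[OF SB] by simp
    qed
  qed
  have cols: "\<forall>v. (\<lambda>u. z u v) \<in> Wsp N R la"
  proof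
    fix v show "(\<lambda>u. z u v) \<in> Wsp N R la"
    proof (cases "length v = lb")
      case True
      then have "(\<lambda>u. z u v) = (\<lambda>u. x (I @ u @ (C @ v @ J)))" using zeq by (auto simp: fun_eq_iff)
      moreover have "(\<lambda>u. x (I @ u @ (C @ v @ J))) \<in> Wsp N R la"
        by (rule slice_Wsp[OF x]) (use len True in simp)
      ultimately show ?thesis by simp
    next
      case False
      then have "(\<lambda>u. z u v) = (\<lambda>_. 0)" unfolding z_def by (simp add: fun_eq_iff)
      then show ?thesis using closed_zero[OF SA] by simp
    qed
  qed
  have fin: "finite {u. z u \<noteq> (\<lambda>_. 0)}"
  proof (rule finite_subset)
    show "{u. z u \<noteq> (\<lambda>_. 0)} \<subseteq> (\<lambda>w. take la (drop (length I) w)) ` supp x"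
    proof
      fix u assume "u \<in> {u. z u \<noteq> (\<lambda>_. 0)}"
      then obtain v where v: "z u v \<noteq> 0" by auto
      then have lu: "length u = la" and nz: "x (I @ u @ C @ v @ J) \<noteq> 0" unfolding z_def by (auto split: if_splits)
      then have "I @ u @ C @ v @ J \<in> supp x" by (simp add: supp_def)
      moreover have "u = take la (drop (length I) (I @ u @ C @ v @ J))" using lu by simp
      ultimately show "u \<in> (\<lambda>w. take la (drop (length I) w)) ` supp x" by blast
    qed
    show "finite ((\<lambda>w. take la (drop (length I) w)) ` supp x)" using xt unfolding tens_def by simp
  qed
  obtain L where L: "\<forall>(h,t)\<in>set L. h \<in> Wsp N R la \<and> t \<in> Wsp N R lb"
    "\<forall>u v. z u v = (\<Sum>(h,t)\<leftarrow>L. h u * t v)"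
    using decomp[OF SA SB fin rows cols] by blast
  have "x (I @ take la w @ C @ drop la w @ J) = z (take la w) (drop la w)" for w
  proof (cases "length (take la w) = la")
    case True then show ?thesis using zeq by simp
  next
    case False
    then have "length w < la" by simp
    then have "length (I @ take la w @ C @ drop la w @ J) \<noteq> n" using len by simp
    then show ?thesis using tens_zero[OF xt] False unfolding z_def by simp
  qed
  then have "(\<lambda>s. x (I @ take la s @ C @ drop la s @ J)) = (\<lambda>w. \<Sum>(h,t)\<leftarrow>L. h (take la w) * t (drop la w))"
    using L(2) by simp
  then show ?thesis using L(1) by blast
qed

lemma core_eval:
  assumes x: "x \<in> Wsp N R n"
    and len: "length I + la + length C + lb + length J = n"
    and L: "\<forall>(h,t)\<in>set L. h \<in> Wsp N R la \<and> t \<in> Wsp N R lb"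
    and y: "(\<lambda>s. x (I @ take la s @ C @ drop la s @ J)) = (\<lambda>w. \<Sum>(h,t)\<leftarrow>L. h (take la w) * t (drop la w))"
    and uv: "length u = la \<or> length v = lb"
  shows "x (I @ u @ C @ v @ J) = (\<Sum>(h,t)\<leftarrow>L. h u * t v)"
proof (cases "length u = la \<and> length v = lb")
  case True
  have "x (I @ take la (u @ v) @ C @ drop la (u @ v) @ J) = (\<Sum>(h,t)\<leftarrow>L. h (take la (u @ v)) * t (drop la (u @ v)))"
    using fun_cong[OF y, of "u @ v"] by simp
  then show ?thesis using True by simp
next
  case False
  have xt: "x \<in> tens n" using x Wsp_tens by blast
  have "length (I @ u @ C @ v @ J) \<noteq> n" using False uv len by auto
  then have "x (I @ u @ C @ v @ J) = 0" using tens_zero[OF xt] by simp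
  moreover have "(\<Sum>(h,t)\<leftarrow>L. h u * t v) = 0"
  proof (rule sum_list_zero_pairs, intro ballI)
    fix p assume p: "p \<in> set L"
    obtain h t where ht: "p = (h, t)" by fastforce
    have "h \<in> tens la" "t \<in> tens lb" using L p ht Wsp_tens by fastforce+
    then have "h u * t v = 0" using False tens_zero by (metis mult_eq_0_iff)
    then show "case p of (h, t) \<Rightarrow> h u * t v = 0" using ht by simp
  qed
  ultimately show ?thesis by simp
qed

lemma core_left:
  assumes ka: "kalg \<iota>" and bm: "bimod \<iota> lm rm" and SR: "subspace_tens N R"
    and x: "x \<in> Wsp N R n" and len: "length I + la + length C + lb + length J = n"
    and F: "linF \<iota> lm (Wsp N R lb) F"
    and phi: "lin_Mk \<iota> lm (MT \<iota> lm (Wsp N R la)) \<phi>"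
  shows "(\<lambda>e. if length e = la then F (\<lambda>s. x (I @ e @ C @ s @ J)) else 0) \<in> MT \<iota> lm (Wsp N R la)
     \<and> contract2 la (Wsp N R la) (Wsp N R lb) (\<lambda>h t. eta \<iota> lm \<phi> h (F t)) (\<lambda>s. x (I @ take la s @ C @ drop la s @ J))
        = \<phi> (\<lambda>e. if length e = la then F (\<lambda>s. x (I @ e @ C @ s @ J)) else 0)"
proof -
  have SB: "closedS (Wsp N R lb)" using Wsp_closed[OF SR] by auto
  obtain L where L: "\<forall>(h,t)\<in>set L. h \<in> Wsp N R la \<and> t \<in> Wsp N R lb"
    and y: "(\<lambda>s. x (I @ take la s @ C @ drop la s @ J)) = (\<lambda>w. \<Sum>(h,t)\<leftarrow>L. h (take la w) * t (drop la w))"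
    and c: "contract2 la (Wsp N R la) (Wsp N R lb) (\<lambda>h t. eta \<iota> lm \<phi> h (F t)) (\<lambda>s. x (I @ take la s @ C @ drop la s @ J))
        = (\<Sum>(h,t)\<leftarrow>L. eta \<iota> lm \<phi> h (F t))"
    using contract2_eq[OF core_common[OF SR x len], where \<beta> = "\<lambda>h t. eta \<iota> lm \<phi> h (F t)"] by blast
  have ev: "x (I @ u @ C @ v @ J) = (\<Sum>(h,t)\<leftarrow>L. h u * t v)" if "length u = la \<or> length v = lb" for u v
    using core_eval[OF x len L y that] .
  define G where "G = (\<lambda>e. \<Sum>(h,t)\<leftarrow>L. mt \<iota> lm (F t) h e)"
  have MTs: "\<forall>(h,t)\<in>set L. mt \<iota> lm (F t) h \<in> MT \<iota> lm (Wsp N R la)" using L MT_mt by fastforce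
  have G12: "G \<in> MT \<iota> lm (Wsp N R la) \<and> \<phi> G = (\<Sum>(h,t)\<leftarrow>L. \<phi> (mt \<iota> lm (F t) h))"
    using phi_sum_pairs[OF phi, of L "\<lambda>h t. mt \<iota> lm (F t) h", OF MTs] unfolding G_def by simp
  have Geq: "G = (\<lambda>e. if length e = la then F (\<lambda>s. x (I @ e @ C @ s @ J)) else 0)"
  proof (rule ext)
    fix e
    have Ge: "G e = (\<Sum>(h,t)\<leftarrow>L. lm (\<iota> (h e)) (F t))" unfolding G_def mt_def by simp
    show "G e = (if length e = la then F (\<lambda>s. x (I @ e @ C @ s @ J)) else 0)"
    proof (cases "length e = la")
      case True
      have "(\<lambda>s. x (I @ e @ C @ s @ J)) = (\<lambda>s. \<Sum>(h,t)\<leftarrow>L. h e * t s)" using ev True by auto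
      moreover have "F (\<lambda>s. \<Sum>(h,t)\<leftarrow>L. h e * t s) = (\<Sum>(h,t)\<leftarrow>L. lm (\<iota> (h e)) (F t))"
        using linF_sum[OF F SB, of L "\<lambda>h t. t" "\<lambda>h t. h e"] L by fastforce
      ultimately show ?thesis using Ge True by simp
    next
      case False
      have "(\<Sum>(h,t)\<leftarrow>L. lm (\<iota> (h e)) (F t)) = 0"
      proof (rule sum_list_zero_pairs, intro ballI)
        fix p assume p: "p \<in> set L"
        obtain h t where ht: "p = (h, t)" by fastforce
        have "h \<in> tens la" using L p ht Wsp_tens by fastforce
        then have "h e = 0" using False tens_zero by metis
        then show "case p of (h, t) \<Rightarrow> lm (\<iota> (h e)) (F t) = 0" using ht kalg_zero[OF ka] bimod_lm0[OF bm] by simp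
      qed
      then show ?thesis using Ge False by simp
    qed
  qed
  show ?thesis using G12 Geq c unfolding eta_def by simp
qed

lemma core_right:
  assumes ka: "kalg \<iota>" and bm: "bimod \<iota> lm rm" and SR: "subspace_tens N R"
    and x: "x \<in> Wsp N R n" and len: "length I + la + length C + lb + length J = n"
    and F: "linF \<iota> lm (Wsp N R la) F"
    and phi: "lin_Mk \<iota> lm (MT \<iota> lm (Wsp N R lb)) \<phi>"
  shows "(\<lambda>e. if length e = lb then F (\<lambda>s. x (I @ s @ C @ e @ J)) else 0) \<in> MT \<iota> lm (Wsp N R lb)
     \<and> contract2 la (Wsp N R la) (Wsp N R lb) (\<lambda>h t. eta \<iota> lm \<phi> t (F h)) (\<lambda>s. x (I @ take la s @ C @ drop la s @ J))
        = \<phi> (\<lambda>e. if length e = lb then F (\<lambda>s. x (I @ s @ C @ e @ J)) else 0)"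
proof -
  have SA: "closedS (Wsp N R la)" using Wsp_closed[OF SR] by auto
  obtain L where L: "\<forall>(h,t)\<in>set L. h \<in> Wsp N R la \<and> t \<in> Wsp N R lb"
    and y: "(\<lambda>s. x (I @ take la s @ C @ drop la s @ J)) = (\<lambda>w. \<Sum>(h,t)\<leftarrow>L. h (take la w) * t (drop la w))"
    and c: "contract2 la (Wsp N R la) (Wsp N R lb) (\<lambda>h t. eta \<iota> lm \<phi> t (F h)) (\<lambda>s. x (I @ take la s @ C @ drop la s @ J))
        = (\<Sum>(h,t)\<leftarrow>L. eta \<iota> lm \<phi> t (F h))"
    using contract2_eq[OF core_common[OF SR x len], where \<beta> = "\<lambda>h t. eta \<iota> lm \<phi> t (F h)"] by blast
  have ev: "x (I @ u @ C @ v @ J) = (\<Sum>(h,t)\<leftarrow>L. h u * t v)" if "length u = la \<or> length v = lb" for u v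
    using core_eval[OF x len L y that] .
  define G where "G = (\<lambda>e. \<Sum>(h,t)\<leftarrow>L. mt \<iota> lm (F h) t e)"
  have MTs: "\<forall>(h,t)\<in>set L. mt \<iota> lm (F h) t \<in> MT \<iota> lm (Wsp N R lb)" using L MT_mt by fastforce
  have G12: "G \<in> MT \<iota> lm (Wsp N R lb) \<and> \<phi> G = (\<Sum>(h,t)\<leftarrow>L. \<phi> (mt \<iota> lm (F h) t))"
    using phi_sum_pairs[OF phi, of L "\<lambda>h t. mt \<iota> lm (F h) t", OF MTs] unfolding G_def by simp
  have Geq: "G = (\<lambda>e. if length e = lb then F (\<lambda>s. x (I @ s @ C @ e @ J)) else 0)"
  proof (rule ext)
    fix e
    have Ge: "G e = (\<Sum>(h,t)\<leftarrow>L. lm (\<iota> (t e)) (F h))" unfolding G_def mt_def by simp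
    show "G e = (if length e = lb then F (\<lambda>s. x (I @ s @ C @ e @ J)) else 0)"
    proof (cases "length e = lb")
      case True
      have "(\<lambda>s. x (I @ s @ C @ e @ J)) = (\<lambda>s. \<Sum>(h,t)\<leftarrow>L. t e * h s)" using ev True by (auto simp: mult.commute)
      moreover have "F (\<lambda>s. \<Sum>(h,t)\<leftarrow>L. t e * h s) = (\<Sum>(h,t)\<leftarrow>L. lm (\<iota> (t e)) (F h))"
        using linF_sum[OF F SA, of L "\<lambda>h t. h" "\<lambda>h t. t e"] L by fastforce
      ultimately show ?thesis using Ge True by simp
    next
      case False
      have "(\<Sum>(h,t)\<leftarrow>L. lm (\<iota> (t e)) (F h)) = 0"
      proof (rule sum_list_zero_pairs, intro ballI)
        fix p assume p: "p \<in> set L"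
        obtain h t where ht: "p = (h, t)" by fastforce
        have "t \<in> tens lb" using L p ht Wsp_tens by fastforce
        then have "t e = 0" using False tens_zero by metis
        then show "case p of (h, t) \<Rightarrow> lm (\<iota> (t e)) (F h) = 0" using ht kalg_zero[OF ka] bimod_lm0[OF bm] by simp
      qed
      then show ?thesis using Ge False by simp
    qed
  qed
  show ?thesis using G12 Geq c unfolding eta_def by simp
qed

lemma linF_left:
  assumes ka: "kalg \<iota>" and bm: "bimod \<iota> lm rm" and f: "lin_A \<iota> S f"
  shows "linF \<iota> lm S (\<lambda>t. lm (a1 * f t * a2) m')"
proof -
  have fa: "f (\<lambda>w. x w + y w) = f x + f y" if "x \<in> S" "y \<in> S" for x y using f that unfolding lin_A_def by blast
  have fs: "f (\<lambda>w. c * x w) = \<iota> c * f x" if "x \<in> S" for c x using f that unfolding lin_A_def by blast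
  have cen: "\<iota> c * a = a * \<iota> c" for c a using ka unfolding kalg_def by blast
  have la: "\<forall>a b m. lm (a + b) m = lm a m + lm b m" using bm unfolding bimod_def by (elim conjE) assumption
  have lmul: "\<forall>a b m. lm (a * b) m = lm a (lm b m)" using bm unfolding bimod_def by (elim conjE) assumption
  show ?thesis unfolding linF_def
  proof (intro conjI ballI allI)
    fix x y assume "x \<in> S" "y \<in> S"
    then show "lm (a1 * f (\<lambda>w. x w + y w) * a2) m' = lm (a1 * f x * a2) m' + lm (a1 * f y * a2) m'"
      using fa la by (simp add: algebra_simps)
  next
    fix c x assume "x \<in> S"
    then have "a1 * f (\<lambda>w. c * x w) * a2 = \<iota> c * (a1 * f x * a2)"
      using fs cen by (metis mult.assoc)
    then show "lm (a1 * f (\<lambda>w. c * x w) * a2) m' = lm (\<iota> c) (lm (a1 * f x * a2) m')"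
      using lmul by simp
  qed
qed

lemma linF_right:
  assumes ka: "kalg \<iota>" and bm: "bimod \<iota> lm rm" and f: "lin_A \<iota> S f"
  shows "linF \<iota> lm S (\<lambda>t. lm a0 (rm m' (a1 * f t * a2)))"
proof -
  have fa: "f (\<lambda>w. x w + y w) = f x + f y" if "x \<in> S" "y \<in> S" for x y using f that unfolding lin_A_def by blast
  have fs: "f (\<lambda>w. c * x w) = \<iota> c * f x" if "x \<in> S" for c x using f that unfolding lin_A_def by blast
  have cen: "\<iota> c * a = a * \<iota> c" for c a using ka unfolding kalg_def by blast
  have lad: "\<forall>a m n. lm a (m + n) = lm a m + lm a n" using bm unfolding bimod_def by (elim conjE) assumption
  have lmul: "\<forall>a b m. lm (a * b) m = lm a (lm b m)" using bm unfolding bimod_def by (elim conjE) assumption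
  have rad: "\<forall>a b m. rm m (a + b) = rm m a + rm m b" using bm unfolding bimod_def by (elim conjE) assumption
  have rmul: "\<forall>a b m. rm m (a * b) = rm (rm m a) b" using bm unfolding bimod_def by (elim conjE) assumption
  have lr: "\<forall>a b m. rm (lm a m) b = lm a (rm m b)" using bm unfolding bimod_def by (elim conjE) assumption
  have ic: "\<forall>c m. lm (\<iota> c) m = rm m (\<iota> c)" using bm unfolding bimod_def by (elim conjE) assumption
  show ?thesis unfolding linF_def
  proof (intro conjI ballI allI)
    fix x y assume "x \<in> S" "y \<in> S"
    then show "lm a0 (rm m' (a1 * f (\<lambda>w. x w + y w) * a2)) = lm a0 (rm m' (a1 * f x * a2)) + lm a0 (rm m' (a1 * f y * a2))"
      using fa lad rad by (simp add: algebra_simps)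
  next
    fix c x assume "x \<in> S"
    then have e1: "a1 * f (\<lambda>w. c * x w) * a2 = \<iota> c * (a1 * f x * a2)"
      using fs cen by (metis mult.assoc)
    have e2: "rm m' (\<iota> c * b) = lm (\<iota> c) (rm m' b)" for b
      using rmul ic lr by metis
    have e3: "lm a0 (lm (\<iota> c) v) = lm (\<iota> c) (lm a0 v)" for v
      using lmul cen by metis
    show "lm a0 (rm m' (a1 * f (\<lambda>w. c * x w) * a2)) = lm (\<iota> c) (lm a0 (rm m' (a1 * f x * a2)))"
      using e1 e2 e3 by simp
  qed
qed

lemma nu_add_even: "\<not> (odd p \<and> odd d) \<Longrightarrow> nu N d + nu N p = nu N (d + p)"
proof -
  assume h: "\<not> (odd p \<and> odd d)"
  show ?thesis
  proof (cases "even p")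
    case True
    then obtain b where b: "p = 2 * b" by (elim evenE)
    show ?thesis
    proof (cases "even d")
      case True
      then obtain a where a: "d = 2 * a" by (elim evenE)
      have "d + p = 2 * (a + b)" using a b by simp
      then show ?thesis unfolding nu_def using a b by (simp add: algebra_simps)
    next
      case False
      then obtain a where a: "d = 2 * a + 1" by (elim oddE)
      have "d + p = 2 * (a + b) + 1" using a b by simp
      then show ?thesis unfolding nu_def using a b by (simp add: algebra_simps)
    qed
  next
    case False
    then obtain b where b: "p = 2 * b + 1" by (elim oddE)
    then have "even d" using h by auto
    then obtain a where a: "d = 2 * a" by (elim evenE)
    have "d + p = 2 * (a + b) + 1" using a b by simp
    then show ?thesis unfolding nu_def using a b by (simp add: algebra_simps)
  qed
qed

lemma nu_even: "\<not> (odd p \<and> odd (q - p)) \<Longrightarrow> p \<le> q \<Longrightarrow> nu N (q - p) + nu N p = nu N q"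
  using nu_add_even[of p "q - p" N] by simp

lemma nu_add_odd: "odd p \<Longrightarrow> odd d \<Longrightarrow> 2 \<le> N \<Longrightarrow> nu N d + nu N p + (N - 2) = nu N (d + p)"
proof -
  assume "odd p" "odd d" "2 \<le> N"
  obtain b where b: "p = 2 * b + 1" using \<open>odd p\<close> by (elim oddE)
  obtain a where a: "d = 2 * a + 1" using \<open>odd d\<close> by (elim oddE)
  have "d + p = 2 * (a + b + 1)" using a b by simp
  then show ?thesis unfolding nu_def using a b \<open>2 \<le> N\<close> by (simp add: algebra_simps)
qed

lemma nu_odd: "odd p \<Longrightarrow> odd (q - p) \<Longrightarrow> p \<le> q \<Longrightarrow> 2 \<le> N \<Longrightarrow> nu N (q - p) + nu N p + (N - 2) = nu N q"
  using nu_add_odd[of p "q - p" N] by simp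

lemma outer3_len:
  assumes "(I, C, J) \<in> outer3 x i l c j" "x \<in> tens n" "i + l + c + j \<le> n"
  shows "length I = i \<and> length C = c \<and> length J = j"
  using assms unfolding outer3_def tens_def by auto

lemma finT: "finite {(i, j). i + j \<le> (K::nat)}"
proof (rule finite_subset)
  show "{(i, j). i + j \<le> K} \<subseteq> {0..K} \<times> {0..K}" by auto
qed auto

lemma outer3_fin: "x \<in> tens n \<Longrightarrow> finite (outer3 x i l c j)"
  unfolding outer3_def tens_def by simp

lemma phi_sum_set2:
  assumes phi: "lin_Mk \<iota> lm (MT \<iota> lm S) \<phi>" and fin: "finite A" and H: "\<forall>(i,j)\<in>A. H i j \<in> MT \<iota> lm S"
  shows "(\<lambda>e. \<Sum>(i,j)\<in>A. H i j e) \<in> MT \<iota> lm S \<and> \<phi> (\<lambda>e. \<Sum>(i,j)\<in>A. H i j e) = (\<Sum>(i,j)\<in>A. \<phi> (H i j))"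
proof -
  have "\<forall>a\<in>A. (case a of (i,j) \<Rightarrow> H i j) \<in> MT \<iota> lm S" using H by auto
  from phi_sum_set[OF phi fin, of "\<lambda>a. case a of (i,j) \<Rightarrow> H i j", OF this] show ?thesis
    by (simp add: case_prod_unfold)
qed

lemma phi_sum_set3:
  assumes phi: "lin_Mk \<iota> lm (MT \<iota> lm S) \<phi>" and fin: "finite A" and H: "\<forall>(I,C,J)\<in>A. G I C J \<in> MT \<iota> lm S"
  shows "(\<lambda>e. \<Sum>(I,C,J)\<in>A. G I C J e) \<in> MT \<iota> lm S \<and> \<phi> (\<lambda>e. \<Sum>(I,C,J)\<in>A. G I C J e) = (\<Sum>(I,C,J)\<in>A. \<phi> (G I C J))"
proof -
  have "\<forall>a\<in>A. (case a of (I,C,J) \<Rightarrow> G I C J) \<in> MT \<iota> lm S" using H by auto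
  from phi_sum_set[OF phi fin, of "\<lambda>a. case a of (I,C,J) \<Rightarrow> G I C J", OF this] show ?thesis
    by (simp add: case_prod_unfold)
qed

theorem proposition4p2:
  fixes N :: nat and R :: "('b list \<Rightarrow> 'k::field) set"
    and \<iota> :: "'k \<Rightarrow> 'a::ring_1" and gen :: "'b \<Rightarrow> 'a"
    and lm :: "'a \<Rightarrow> 'm::ab_group_add \<Rightarrow> 'm" and rm :: "'m \<Rightarrow> 'a \<Rightarrow> 'm"
    and p q :: nat and f :: "('b list \<Rightarrow> 'k) \<Rightarrow> 'a" and \<phi> :: "('b list \<Rightarrow> 'm) \<Rightarrow> 'k"
  assumes "N \<ge> 2"
    and "subspace_tens N R"
    and "presents N R \<iota> gen"
    and "bimod \<iota> lm rm"
    and "p \<le> q"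
    and "lin_A \<iota> (Wsp N R (nu N p)) f"
    and "lin_Mk \<iota> lm (MT \<iota> lm (Wsp N R (nu N (q - p)))) \<phi>"
  shows "(\<forall>x\<in>Wsp N R (nu N q). \<forall>m.
            \<phi> (capL N lm rm gen f p q m x)
              = cupMA N R lm rm gen (eta \<iota> lm \<phi>) (q - p) f p x m)
       \<and> (\<forall>x\<in>Wsp N R (nu N q). \<forall>m.
            \<phi> (capR N lm rm gen f p q m x)
              = (-1) ^ p * cupAM N R lm rm gen f p (eta \<iota> lm \<phi>) (q - p) x m)"
proof -
  have ka: "kalg \<iota>" using assms(3) unfolding presents_def by blast
  have bm: "bimod \<iota> lm rm" by (rule assms(4))
  have SR: "subspace_tens N R" by (rule assms(2))
  have fl: "lin_A \<iota> (Wsp N R (nu N p)) f" by (rule assms(6))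
  have phi: "lin_Mk \<iota> lm (MT \<iota> lm (Wsp N R (nu N (q - p)))) \<phi>" by (rule assms(7))
  have pq: "p \<le> q" by (rule assms(5))
  have N2: "2 \<le> N" by (rule assms(1))
  have part1: "\<forall>x\<in>Wsp N R (nu N q). \<forall>m.
            \<phi> (capL N lm rm gen f p q m x)
              = cupMA N R lm rm gen (eta \<iota> lm \<phi>) (q - p) f p x m"
  proof (intro ballI allI)
    fix x m assume x: "x \<in> Wsp N R (nu N q)"
    have xt: "x \<in> tens (nu N q)" using x Wsp_tens by blast
    show "\<phi> (capL N lm rm gen f p q m x) = cupMA N R lm rm gen (eta \<iota> lm \<phi>) (q - p) f p x m"
    proof (cases "odd p \<and> odd (q - p)")
      case False
      have len: "length [] + nu N (q - p) + length [] + nu N p + length [] = nu N q"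
        using nu_even[OF False pq] by simp
      have F: "linF \<iota> lm (Wsp N R (nu N p)) (\<lambda>t. lm (1 * f t * 1) m)" by (rule linF_left[OF ka bm fl])
      have F': "linF \<iota> lm (Wsp N R (nu N p)) (\<lambda>t. lm (f t) m)" using F by simp
      note core = core_left[OF ka bm SR x len F' phi]
      have c1: "capL N lm rm gen f p q m x = (\<lambda>e. if length e = nu N (q - p) then lm (f (\<lambda>s. x ([] @ e @ [] @ s @ []))) m else 0)"
        unfolding capL_def using False by auto
      have c2: "cupMA N R lm rm gen (eta \<iota> lm \<phi>) (q - p) f p x m = contract2 (nu N (q - p)) (Wsp N R (nu N (q - p))) (Wsp N R (nu N p))
          (\<lambda>h t. eta \<iota> lm \<phi> h (lm (f t) m)) (\<lambda>s. x ([] @ take (nu N (q - p)) s @ [] @ drop (nu N (q - p)) s @ []))"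
        unfolding cupMA_def Let_def using False by auto
      show ?thesis using core c1 c2 by simp
    next
      case True
      define G where "G = (\<lambda>I C J. \<lambda>e. if length e = nu N (q - p) then lm (gw gen C * f (\<lambda>s. x (I @ e @ C @ s @ J)) * gw gen J) (rm m (gw gen I)) else 0)"
      have lens: "length I + nu N (q - p) + length C + nu N p + length J = nu N q"
        if "(I, C, J) \<in> outer3 x i (nu N (q - p)) (N - j - 2 - i) j" "i + j \<le> N - 2" for I C J i j
      proof -
        have s: "nu N (q - p) + nu N p + (N - 2) = nu N q" using nu_odd[of p q N] True pq N2 by simp
        have "i + nu N (q - p) + (N - j - 2 - i) + j \<le> nu N q" using that(2) s by simp
        then have "length I = i \<and> length C = N - j - 2 - i \<and> length J = j" using outer3_len[OF that(1) xt] by blast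
        then show ?thesis using that(2) s by simp
      qed
      have core: "G I C J \<in> MT \<iota> lm (Wsp N R (nu N (q - p))) \<and>
          contract2 (nu N (q - p)) (Wsp N R (nu N (q - p))) (Wsp N R (nu N p))
            (\<lambda>h t. eta \<iota> lm \<phi> h (lm (gw gen C * f t * gw gen J) (rm m (gw gen I))))
            (\<lambda>s. x (I @ take (nu N (q - p)) s @ C @ drop (nu N (q - p)) s @ J)) = \<phi> (G I C J)"
        if "(I, C, J) \<in> outer3 x i (nu N (q - p)) (N - j - 2 - i) j" "i + j \<le> N - 2" for I C J i j
        using core_left[OF ka bm SR x lens[OF that] linF_left[OF ka bm fl] phi] unfolding G_def by simp
      have inner: "(\<lambda>e. \<Sum>(I,C,J)\<in>outer3 x i (nu N (q - p)) (N - j - 2 - i) j. G I C J e) \<in> MT \<iota> lm (Wsp N R (nu N (q - p)))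
          \<and> \<phi> (\<lambda>e. \<Sum>(I,C,J)\<in>outer3 x i (nu N (q - p)) (N - j - 2 - i) j. G I C J e)
             = (\<Sum>(I,C,J)\<in>outer3 x i (nu N (q - p)) (N - j - 2 - i) j. \<phi> (G I C J))"
        if "i + j \<le> N - 2" for i j
        by (rule phi_sum_set3[OF phi outer3_fin[OF xt]]) (use core that in blast)
      have outer: "(\<lambda>e. \<Sum>(i,j)\<in>{(i, j). i + j \<le> N - 2}. \<Sum>(I,C,J)\<in>outer3 x i (nu N (q - p)) (N - j - 2 - i) j. G I C J e) \<in> MT \<iota> lm (Wsp N R (nu N (q - p)))
          \<and> \<phi> (\<lambda>e. \<Sum>(i,j)\<in>{(i, j). i + j \<le> N - 2}. \<Sum>(I,C,J)\<in>outer3 x i (nu N (q - p)) (N - j - 2 - i) j. G I C J e)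
             = (\<Sum>(i,j)\<in>{(i, j). i + j \<le> N - 2}. \<phi> (\<lambda>e. \<Sum>(I,C,J)\<in>outer3 x i (nu N (q - p)) (N - j - 2 - i) j. G I C J e))"
        by (rule phi_sum_set2[OF phi finT]) (use inner in blast)
      have c1: "capL N lm rm gen f p q m x = (\<lambda>e. - (\<Sum>(i,j)\<in>{(i, j). i + j \<le> N - 2}. \<Sum>(I,C,J)\<in>outer3 x i (nu N (q - p)) (N - j - 2 - i) j. G I C J e))"
        unfolding capL_def G_def using True by (auto simp: fun_eq_iff case_prod_unfold)
      have c2: "cupMA N R lm rm gen (eta \<iota> lm \<phi>) (q - p) f p x m = - (\<Sum>(i,j)\<in>{(i, j). i + j \<le> N - 2}.
           \<Sum>(I,C,E)\<in>outer3 x i (nu N (q - p)) (N - j - 2 - i) j.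
             contract2 (nu N (q - p)) (Wsp N R (nu N (q - p))) (Wsp N R (nu N p))
               (\<lambda>h t. eta \<iota> lm \<phi> h (lm (gw gen C * f t * gw gen E) (rm m (gw gen I))))
               (\<lambda>s. x (I @ take (nu N (q - p)) s @ C @ drop (nu N (q - p)) s @ E)))"
        unfolding cupMA_def Let_def using True by auto
      also have "\<dots> = - (\<Sum>(i,j)\<in>{(i, j). i + j \<le> N - 2}. \<Sum>(I,C,E)\<in>outer3 x i (nu N (q - p)) (N - j - 2 - i) j. \<phi> (G I C E))"
        using core by (auto intro!: sum.cong)
      finally have c2': "cupMA N R lm rm gen (eta \<iota> lm \<phi>) (q - p) f p x m = \<dots>" .
      have "\<phi> (capL N lm rm gen f p q m x) = - \<phi> (\<lambda>e. \<Sum>(i,j)\<in>{(i, j). i + j \<le> N - 2}. \<Sum>(I,C,J)\<in>outer3 x i (nu N (q - p)) (N - j - 2 - i) j. G I C J e)"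
        unfolding c1 using phi_neg[OF phi outer[THEN conjunct1] ka bm] .
      also have "\<dots> = - (\<Sum>(i,j)\<in>{(i, j). i + j \<le> N - 2}. \<Sum>(I,C,E)\<in>outer3 x i (nu N (q - p)) (N - j - 2 - i) j. \<phi> (G I C E))"
        using outer inner by (auto intro!: sum.cong)
      finally show ?thesis using c2' by simp
    qed
  qed
  have lm1: "lm 1 v = v" for v
  proof -
    have "\<forall>m. lm 1 m = m" using bm unfolding bimod_def by (elim conjE) assumption
    then show ?thesis by blast
  qed
  have part2: "\<forall>x\<in>Wsp N R (nu N q). \<forall>m.
            \<phi> (capR N lm rm gen f p q m x)
              = (-1) ^ p * cupAM N R lm rm gen f p (eta \<iota> lm \<phi>) (q - p) x m"
  proof (intro ballI allI)
    fix x m assume x: "x \<in> Wsp N R (nu N q)"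
    have xt: "x \<in> tens (nu N q)" using x Wsp_tens by blast
    show "\<phi> (capR N lm rm gen f p q m x) = (-1) ^ p * cupAM N R lm rm gen f p (eta \<iota> lm \<phi>) (q - p) x m"
    proof (cases "odd p \<and> odd (q - p)")
      case False
      have len: "length [] + nu N p + length [] + nu N (q - p) + length [] = nu N q"
        using nu_even[OF False pq, of N] by simp
      have F: "linF \<iota> lm (Wsp N R (nu N p)) (\<lambda>t. lm 1 (rm m (1 * f t * 1)))" by (rule linF_right[OF ka bm fl])
      have F': "linF \<iota> lm (Wsp N R (nu N p)) (\<lambda>t. rm m (f t))" using F by (simp add: lm1)
      note core = core_right[OF ka bm SR x len F' phi]
      define Gf where "Gf = (\<lambda>e. if length e = nu N (q - p) then rm m (f (\<lambda>s. x ([] @ s @ [] @ e @ []))) else 0)"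
      have c2: "cupAM N R lm rm gen f p (eta \<iota> lm \<phi>) (q - p) x m = contract2 (nu N p) (Wsp N R (nu N p)) (Wsp N R (nu N (q - p)))
          (\<lambda>h t. eta \<iota> lm \<phi> t (rm m (f h))) (\<lambda>s. x ([] @ take (nu N p) s @ [] @ drop (nu N p) s @ []))"
        unfolding cupAM_def Let_def using False by auto
      have c2': "cupAM N R lm rm gen f p (eta \<iota> lm \<phi>) (q - p) x m = \<phi> Gf" and GfM: "Gf \<in> MT \<iota> lm (Wsp N R (nu N (q - p)))"
        using core c2 unfolding Gf_def by simp_all
      show ?thesis
      proof (cases "even p")
        case True
        then have "even (p * q)" by simp
        then have "capR N lm rm gen f p q m x = Gf" unfolding capR_def Gf_def negp_def using False by (auto simp: fun_eq_iff)
        then show ?thesis using c2' True by simp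
      next
        case podd: False
        then have "odd q" using False pq by (metis le_add_diff_inverse odd_add)
        then have "odd (p * q)" using podd by simp
        then have "capR N lm rm gen f p q m x = (\<lambda>e. - Gf e)" unfolding capR_def Gf_def negp_def using False by (auto simp: fun_eq_iff)
        then show ?thesis using c2' podd phi_neg[OF phi GfM ka bm] by simp
      qed
    next
      case True
      define G where "G = (\<lambda>I C J. \<lambda>e. if length e = nu N (q - p) then lm (gw gen J) (rm m (gw gen I * f (\<lambda>s. x (I @ s @ C @ e @ J)) * gw gen C)) else 0)"
      have lens: "length I + nu N p + length C + nu N (q - p) + length J = nu N q"
        if "(I, C, J) \<in> outer3 x i (nu N p) (N - j - 2 - i) j" "i + j \<le> N - 2" for I C J i j
      proof -
        have s: "nu N (q - p) + nu N p + (N - 2) = nu N q" using nu_odd[of p q N] True pq N2 by simp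
        have "i + nu N p + (N - j - 2 - i) + j \<le> nu N q" using that(2) s by simp
        then have "length I = i \<and> length C = N - j - 2 - i \<and> length J = j" using outer3_len[OF that(1) xt] by blast
        then show ?thesis using that(2) s by simp
      qed
      have core: "G I C J \<in> MT \<iota> lm (Wsp N R (nu N (q - p))) \<and>
          contract2 (nu N p) (Wsp N R (nu N p)) (Wsp N R (nu N (q - p)))
            (\<lambda>h t. eta \<iota> lm \<phi> t (lm (gw gen J) (rm m (gw gen I * f h * gw gen C))))
            (\<lambda>s. x (I @ take (nu N p) s @ C @ drop (nu N p) s @ J)) = \<phi> (G I C J)"
        if "(I, C, J) \<in> outer3 x i (nu N p) (N - j - 2 - i) j" "i + j \<le> N - 2" for I C J i j
        using core_right[OF ka bm SR x lens[OF that] linF_right[OF ka bm fl] phi] unfolding G_def by simp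
      have inner: "(\<lambda>e. \<Sum>(I,C,J)\<in>outer3 x i (nu N p) (N - j - 2 - i) j. G I C J e) \<in> MT \<iota> lm (Wsp N R (nu N (q - p)))
          \<and> \<phi> (\<lambda>e. \<Sum>(I,C,J)\<in>outer3 x i (nu N p) (N - j - 2 - i) j. G I C J e)
             = (\<Sum>(I,C,J)\<in>outer3 x i (nu N p) (N - j - 2 - i) j. \<phi> (G I C J))"
        if "i + j \<le> N - 2" for i j
        by (rule phi_sum_set3[OF phi outer3_fin[OF xt]]) (use core that in blast)
      have outer: "(\<lambda>e. \<Sum>(i,j)\<in>{(i, j). i + j \<le> N - 2}. \<Sum>(I,C,J)\<in>outer3 x i (nu N p) (N - j - 2 - i) j. G I C J e) \<in> MT \<iota> lm (Wsp N R (nu N (q - p)))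
          \<and> \<phi> (\<lambda>e. \<Sum>(i,j)\<in>{(i, j). i + j \<le> N - 2}. \<Sum>(I,C,J)\<in>outer3 x i (nu N p) (N - j - 2 - i) j. G I C J e)
             = (\<Sum>(i,j)\<in>{(i, j). i + j \<le> N - 2}. \<phi> (\<lambda>e. \<Sum>(I,C,J)\<in>outer3 x i (nu N p) (N - j - 2 - i) j. G I C J e))"
        by (rule phi_sum_set2[OF phi finT]) (use inner in blast)
      have c1: "capR N lm rm gen f p q m x = (\<lambda>e. (\<Sum>(i,j)\<in>{(i, j). i + j \<le> N - 2}. \<Sum>(I,C,J)\<in>outer3 x i (nu N p) (N - j - 2 - i) j. G I C J e))"
        unfolding capR_def G_def using True by (auto simp: fun_eq_iff case_prod_unfold)
      have c2: "cupAM N R lm rm gen f p (eta \<iota> lm \<phi>) (q - p) x m = - (\<Sum>(i,j)\<in>{(i, j). i + j \<le> N - 2}.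
           \<Sum>(I,C,E)\<in>outer3 x i (nu N p) (N - j - 2 - i) j.
             contract2 (nu N p) (Wsp N R (nu N p)) (Wsp N R (nu N (q - p)))
               (\<lambda>h t. eta \<iota> lm \<phi> t (lm (gw gen E) (rm m (gw gen I * f h * gw gen C))))
               (\<lambda>s. x (I @ take (nu N p) s @ C @ drop (nu N p) s @ E)))"
        unfolding cupAM_def Let_def using True by auto
      also have "\<dots> = - (\<Sum>(i,j)\<in>{(i, j). i + j \<le> N - 2}. \<Sum>(I,C,E)\<in>outer3 x i (nu N p) (N - j - 2 - i) j. \<phi> (G I C E))"
        using core by (auto intro!: sum.cong)
      finally have c2': "cupAM N R lm rm gen f p (eta \<iota> lm \<phi>) (q - p) x m = \<dots>" .
      have "\<phi> (capR N lm rm gen f p q m x) = (\<Sum>(i,j)\<in>{(i, j). i + j \<le> N - 2}. \<Sum>(I,C,E)\<in>outer3 x i (nu N p) (N - j - 2 - i) j. \<phi> (G I C E))"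
        unfolding c1 using outer inner by (auto intro!: sum.cong)
      then show ?thesis using c2' True by simp
    qed
  qed
  show ?thesis using part1 part2 by blast
qed

end
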